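(* In the binary model, let $\lambda\in(\frac12,g]$, where $g=\frac{\sqrt5-1}{2}$, and let $I=[0,\frac{\lambda}{1-\lambda}]$. Suppose that the set of $x\in I$ for which $\mathcal{E}_\lambda(x)$ has zero logarithmic capacity (for example, is countable) is dense in $I$. Then almost surely $S$ is totally disconnected.
   Context: Binary model. Let $T=\{1,2\}^*$ be the set of finite words over $\{1,2\}$ (the rooted binary tree; $v|j$ is the prefix of $v$ of length $j$). Let $\{a_v\}_{v\in T,\,|v|\ge1}$ be i.i.d. random variables with $\mathbb{P}(a_v=0)=\mathbb{P}(a_v=1)=\frac12$. Fix $\lambda\in(0,1)$. For $\omega\in\{1,2\}^{\mathbb{N}}$ put $f(\omega)=\sum_{j\ge1}a_{\omega|j}\lambda^j$. Let $\mu$ be the image under $f$ of the uniform product measure on $\{1,2\}^{\mathbb{N}}$, and $S=f(\{1,2\}^{\mathbb{N}})$ its (random, compact) support. For $x\in\mathbb{R}$, $\mathcal{E}_\lambda(x)=\{a\in\{0,1\}^{\mathbb{N}}: x=\sum_{n\ge1}a_n\lambda^n\}$ is the set of expansions of $x$ in base $\lambda$ with digits $0,1$. Logarithmic capacity of subsets of $\{0,1\}^{\mathbb{N}}$ is taken with respect to the standard metric $d(a,b)=2^{-N(a,b)}$, where $N(a,b)$ is the length of the longest common prefix of $a$ and $b$ (i.e. capacity with respect to the kernel $\log(1/d(a,b))$). *)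

theory Defs
  imports "HOL-Probability.Probability"
begin

text \<open>Digit sequences in {0,1}^N are encoded as functions nat => bool,
  index n (0-based) standing for the (n+1)-st digit; True = 1, False = 0.\<close>

definition seq_space :: "(nat \<Rightarrow> bool) measure" where
  "seq_space = (\<Pi>\<^sub>M i\<in>(UNIV::nat set). count_space (UNIV::bool set))"

text \<open>Kernel log(1/d(a,b)) with d(a,b) = 2^(-N(a,b)), N = length of longest common
  prefix; equals N(a,b) * ln 2, and +infinity on the diagonal.\<close>
definition log_kernel :: "(nat \<Rightarrow> bool) \<Rightarrow> (nat \<Rightarrow> bool) \<Rightarrow> ennreal" where
  "log_kernel a b =
     (if a = b then \<infinity> else ennreal (real (LEAST n. a n \<noteq> b n) * ln 2))"

definition log_energy :: "(nat \<Rightarrow> bool) measure \<Rightarrow> ennreal" where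
  "log_energy \<mu> = (\<integral>\<^sup>+ a. (\<integral>\<^sup>+ b. log_kernel a b \<partial>\<mu>) \<partial>\<mu>)"

definition zero_log_capacity :: "(nat \<Rightarrow> bool) set \<Rightarrow> bool" where
  "zero_log_capacity E \<longleftrightarrow>
     (\<forall>\<mu>. prob_space \<mu> \<and> sets \<mu> = sets seq_space \<and> (AE a in \<mu>. a \<in> E)
            \<longrightarrow> log_energy \<mu> = \<infinity>)"

definition expansions :: "real \<Rightarrow> real \<Rightarrow> (nat \<Rightarrow> bool) set" where
  "expansions r x = {a. x = (\<Sum>n. (if a n then 1 else 0) * r ^ Suc n)}"

text \<open>Words over {1,2} are bool lists (False = 1, True = 2); omega|j = prefix of length j.\<close>
definition prefix_word :: "(nat \<Rightarrow> bool) \<Rightarrow> nat \<Rightarrow> bool list" where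
  "prefix_word \<omega> j = map \<omega> [0..<j]"

definition coding_map :: "real \<Rightarrow> (bool list \<Rightarrow> bool) \<Rightarrow> (nat \<Rightarrow> bool) \<Rightarrow> real" where
  "coding_map r A \<omega> = (\<Sum>j. (if A (prefix_word \<omega> (Suc j)) then 1 else 0) * r ^ Suc j)"

definition attractor :: "real \<Rightarrow> (bool list \<Rightarrow> bool) \<Rightarrow> real set" where
  "attractor r A = range (coding_map r A)"

definition totally_disconnected :: "'a::topological_space set \<Rightarrow> bool" where
  "totally_disconnected S \<longleftrightarrow> (\<forall>C. C \<subseteq> S \<and> connected C \<longrightarrow> (\<exists>a. C \<subseteq> {a}))"

end

theory Submission
  imports Defs
begin


fun hitr :: "(bool list \<Rightarrow> bool) \<Rightarrow> bool list set \<Rightarrow> nat \<Rightarrow> bool list \<Rightarrow> bool list \<Rightarrow> bool" where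
  "hitr \<alpha> P 0 pre lab = (lab \<in> P)"
| "hitr \<alpha> P (Suc m) pre lab = (\<exists>c. hitr \<alpha> P m (pre @ [c]) (lab @ [\<alpha> (pre @ [c])]))"

definition Fq :: "real \<Rightarrow> real" where "Fq s = 2 * s - s^2"

fun gq :: "bool list set \<Rightarrow> nat \<Rightarrow> bool list \<Rightarrow> real" where
  "gq P 0 u = (if u \<in> P then 1 else 0)"
| "gq P (Suc n) u = Fq ((gq P n (u @ [False]) + gq P n (u @ [True])) / 2)"

definition Dset :: "bool list \<Rightarrow> bool list set" where
  "Dset q = {v. \<exists>z. z \<noteq> [] \<and> v = q @ z}"

lemma sigma_sets_Int2:
  assumes "a \<in> sigma_sets sp G" "b \<in> sigma_sets sp G" "G \<subseteq> Pow sp"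
  shows "a \<inter> b \<in> sigma_sets sp G"
proof -
  have "a \<subseteq> sp" "b \<subseteq> sp" using assms sigma_sets_into_sp by blast+
  then have "a \<inter> b = sp - ((sp - a) \<union> (sp - b))" by blast
  also have "\<dots> \<in> sigma_sets sp G"
    using assms by (intro sigma_sets.Compl sigma_sets_Un) auto
  finally show ?thesis .
qed

locale binmodel = prob_space M for M :: "'w measure" +
  fixes A :: "bool list \<Rightarrow> 'w \<Rightarrow> bool"
  assumes ind: "indep_vars (\<lambda>_. count_space UNIV) A {v. v \<noteq> []}"
    and half: "\<And>v. v \<noteq> [] \<Longrightarrow> prob {w \<in> space M. A v w} = 1/2"
begin

definition Gen :: "bool list set \<Rightarrow> 'w set set" where
  "Gen K = sigma_sets (space M) (\<Union>v\<in>K. {A v -` B \<inter> space M | B. B \<in> sets (count_space (UNIV::bool set))})"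

definition Hev :: "bool list set \<Rightarrow> nat \<Rightarrow> bool list \<Rightarrow> bool list \<Rightarrow> 'w set" where
  "Hev P m pre lab = {w \<in> space M. hitr (\<lambda>v. A v w) P m pre lab}"

lemma meas_A: "v \<noteq> [] \<Longrightarrow> A v \<in> measurable M (count_space UNIV)"
  using ind unfolding indep_vars_def2 by auto

lemma gen_pow: "(\<Union>v\<in>K. {A v -` B \<inter> space M | B. B \<in> sets (count_space (UNIV::bool set))}) \<subseteq> Pow (space M)"
  by auto

lemma Gen_mono: "K \<subseteq> K' \<Longrightarrow> Gen K \<subseteq> Gen K'"
  unfolding Gen_def by (rule sigma_sets_mono') blast

lemma Gen_Int: "a \<in> Gen K \<Longrightarrow> b \<in> Gen K \<Longrightarrow> a \<inter> b \<in> Gen K"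
  unfolding Gen_def by (rule sigma_sets_Int2[OF _ _ gen_pow])

lemma Gen_Un: "a \<in> Gen K \<Longrightarrow> b \<in> Gen K \<Longrightarrow> a \<union> b \<in> Gen K"
  unfolding Gen_def by (rule sigma_sets_Un)

lemma Gen_basic: "v \<in> K \<Longrightarrow> {w \<in> space M. A v w = b} \<in> Gen K"
proof -
  assume "v \<in> K"
  have "{w \<in> space M. A v w = b} = A v -` {b} \<inter> space M" by auto
  then show ?thesis unfolding Gen_def using \<open>v \<in> K\<close>
    by (intro sigma_sets.Basic) auto
qed

lemma Gen_events: assumes K: "K \<subseteq> {v. v \<noteq> []}" shows "Gen K \<subseteq> events"
  unfolding Gen_def
proof (rule sets.sigma_sets_subset)
  show "(\<Union>v\<in>K. {A v -` B \<inter> space M | B. B \<in> sets (count_space (UNIV::bool set))}) \<subseteq> events"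
  proof
    fix x assume "x \<in> (\<Union>v\<in>K. {A v -` B \<inter> space M | B. B \<in> sets (count_space (UNIV::bool set))})"
    then obtain v B where "v \<in> K" "x = A v -` B \<inter> space M" by blast
    then show "x \<in> events" using K meas_A by (simp add: measurable_sets subset_iff)
  qed
qed

lemma Gen_indep:
  assumes "K1 \<inter> K2 = {}" "K1 \<subseteq> {v. v \<noteq> []}" "K2 \<subseteq> {v. v \<noteq> []}" "e1 \<in> Gen K1" "e2 \<in> Gen K2"
  shows "prob (e1 \<inter> e2) = prob e1 * prob e2"
proof -
  let ?E = "\<lambda>v. {A v -` B \<inter> space M | B. B \<in> sets (count_space (UNIV::bool set))}"
  let ?I = "\<lambda>b::bool. if b then K1 else K2"
  have i0: "indep_sets ?E {v. v \<noteq> []}" using ind unfolding indep_vars_def2 by auto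
  have i1: "indep_sets ?E (\<Union>j\<in>UNIV. ?I j)"
    by (rule indep_sets_mono_index[OF _ i0]) (use assms(2,3) in \<open>simp add: subset_iff\<close>)
  have "indep_sets (\<lambda>j. sigma_sets (space M) (\<Union>i\<in>?I j. ?E i)) UNIV"
  proof (rule indep_sets_collect_sigma[OF i1])
    fix i j show "Int_stable (?E i)"
      unfolding Int_stable_def
    proof (intro ballI)
      fix a b assume "a \<in> ?E i" "b \<in> ?E i"
      then obtain B1 B2 where "a = A i -` B1 \<inter> space M" "b = A i -` B2 \<inter> space M" by blast
      then have "a \<inter> b = A i -` (B1 \<inter> B2) \<inter> space M" by blast
      then show "a \<inter> b \<in> ?E i" by (intro CollectI exI[of _ "B1 \<inter> B2"]) simp
    qed
  next
    show "disjoint_family_on ?I UNIV" using assms(1)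
      by (auto simp: disjoint_family_on_def)
  qed
  then have "prob (\<Inter>j\<in>UNIV. (\<lambda>b. if b then e1 else e2) j) = (\<Prod>j\<in>UNIV. prob ((\<lambda>b. if b then e1 else e2) j))"
  proof (rule indep_setsD)
    show "\<forall>j\<in>UNIV. (if j then e1 else e2) \<in> sigma_sets (space M) (\<Union>i\<in>?I j. ?E i)"
      using assms(4,5) unfolding Gen_def by simp
  qed auto
  moreover have "(\<Inter>j\<in>UNIV. (\<lambda>b::bool. if b then e1 else e2) j) = e1 \<inter> e2"
    by (auto simp: UNIV_bool)
  ultimately show ?thesis by (simp add: UNIV_bool)
qed

definition Bv :: "bool list \<Rightarrow> bool \<Rightarrow> 'w set" where
  "Bv v b = {w \<in> space M. A v w = b}"

definition Xc :: "bool list set \<Rightarrow> nat \<Rightarrow> bool list \<Rightarrow> bool list \<Rightarrow> bool \<Rightarrow> 'w set" where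
  "Xc P m q lab c = (Bv (q@[c]) True \<inter> Hev P m (q@[c]) (lab@[True])) \<union>
                    (Bv (q@[c]) False \<inter> Hev P m (q@[c]) (lab@[False]))"

lemma Hev_Suc: "Hev P (Suc m) q lab = Xc P m q lab False \<union> Xc P m q lab True"
proof -
  have "\<And>w. hitr (\<lambda>v. A v w) P (Suc m) q lab \<longleftrightarrow>
     (\<exists>c. (A (q@[c]) w = True \<and> hitr (\<lambda>v. A v w) P m (q@[c]) (lab@[True])) \<or>
          (A (q@[c]) w = False \<and> hitr (\<lambda>v. A v w) P m (q@[c]) (lab@[False])))"
    by simp (metis (full_types))
  then show ?thesis unfolding Hev_def Xc_def Bv_def
    by (simp only: ex_bool_eq) blast
qed

lemma Dset_sub: "Dset q \<subseteq> {v. v \<noteq> []}"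
  by (auto simp: Dset_def)

lemma Dset_snoc: "insert (q@[c]) (Dset (q@[c])) \<subseteq> Dset q"
  by (auto simp: Dset_def)

lemma Bv_Gen: "v \<in> K \<Longrightarrow> Bv v b \<in> Gen K"
  unfolding Bv_def by (rule Gen_basic)

lemma Hev_Gen: "Hev P m q lab \<in> Gen (Dset q)"
proof (induction m arbitrary: q lab)
  case 0
  have "Hev P 0 q lab = (if lab \<in> P then space M else {})"
    by (auto simp: Hev_def)
  then show ?case unfolding Gen_def by (simp add: sigma_sets_top sigma_sets.Empty)
next
  case (Suc m)
  have X: "Xc P m q lab c \<in> Gen (insert (q@[c]) (Dset (q@[c])))" for c
  proof -
    have "Hev P m (q@[c]) l \<in> Gen (insert (q@[c]) (Dset (q@[c])))" for l
      using Suc.IH[of "q@[c]" l] Gen_mono[of "Dset (q@[c])" "insert (q@[c]) (Dset (q@[c]))"] by blast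
    then show ?thesis unfolding Xc_def
      by (intro Gen_Un Gen_Int Bv_Gen) auto
  qed
  have "Xc P m q lab c \<in> Gen (Dset q)" for c
    using X[of c] Gen_mono[OF Dset_snoc[of q c]] by blast
  then show ?case unfolding Hev_Suc by (intro Gen_Un)
qed

lemma Hev_events: "Hev P m q lab \<in> events"
  using Hev_Gen Gen_events[OF Dset_sub] by blast

lemma Bv_events: "v \<noteq> [] \<Longrightarrow> Bv v b \<in> events"
  using Bv_Gen[of v "{v}" b] Gen_events[of "{v}"] by blast

lemma prob_Bv: assumes "v \<noteq> []" shows "prob (Bv v b) = 1/2"
proof (cases b)
  case True
  then show ?thesis using half[OF assms] by (simp add: Bv_def)
next
  case False
  have "Bv v False = space M - Bv v True" by (auto simp: Bv_def)
  then have "prob (Bv v False) = 1 - prob (Bv v True)"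
    using prob_compl[OF Bv_events[OF assms]] by simp
  then show ?thesis using half[OF assms] False by (simp add: Bv_def)
qed

lemma prob_Hev: "prob (Hev P m pre lab) = gq P m lab"
proof (induction m arbitrary: pre lab)
  case 0
  have "Hev P 0 pre lab = (if lab \<in> P then space M else {})"
    by (auto simp: Hev_def)
  then show ?case by (simp add: prob_space)
next
  case (Suc m)
  let ?s = "(gq P m (lab @ [False]) + gq P m (lab @ [True])) / 2"
  have pX: "prob (Xc P m pre lab c) = ?s" for c
  proof -
    have d: "Bv (pre@[c]) True \<inter> Hev P m (pre@[c]) (lab@[True]) \<inter>
             (Bv (pre@[c]) False \<inter> Hev P m (pre@[c]) (lab@[False])) = {}"
      by (auto simp: Bv_def)
    have ind1: "prob (Bv (pre@[c]) b \<inter> Hev P m (pre@[c]) l) = 1/2 * gq P m l" for b l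
    proof -
      have "prob (Bv (pre@[c]) b \<inter> Hev P m (pre@[c]) l) = prob (Bv (pre@[c]) b) * prob (Hev P m (pre@[c]) l)"
      proof (rule Gen_indep[of "{pre@[c]}" "Dset (pre@[c])"])
        show "{pre @ [c]} \<inter> Dset (pre @ [c]) = {}" by (auto simp: Dset_def)
        show "Dset (pre @ [c]) \<subseteq> {v. v \<noteq> []}" by (rule Dset_sub)
        show "Hev P m (pre @ [c]) l \<in> Gen (Dset (pre @ [c]))" by (rule Hev_Gen)
      qed (auto intro: Bv_Gen)
      then show ?thesis using prob_Bv[of "pre@[c]" b] Suc.IH by simp
    qed
    have "prob (Xc P m pre lab c) = prob (Bv (pre@[c]) True \<inter> Hev P m (pre@[c]) (lab@[True])) +
        prob (Bv (pre@[c]) False \<inter> Hev P m (pre@[c]) (lab@[False]))"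
      unfolding Xc_def using d
      by (intro finite_measure_Union) (auto intro!: Bv_events Hev_events)
    then show ?thesis using ind1 by simp
  qed
  have XG: "Xc P m pre lab c \<in> Gen (insert (pre@[c]) (Dset (pre@[c])))" for c
  proof -
    have "Hev P m (pre@[c]) l \<in> Gen (insert (pre@[c]) (Dset (pre@[c])))" for l
      using Hev_Gen[of P m "pre@[c]" l] Gen_mono[of "Dset (pre@[c])" "insert (pre@[c]) (Dset (pre@[c]))"] by blast
    then show ?thesis unfolding Xc_def
      by (intro Gen_Un Gen_Int Bv_Gen) auto
  qed
  have Xev: "Xc P m pre lab c \<in> events" for c
    using XG[of c] Gen_events[of "insert (pre@[c]) (Dset (pre@[c]))"] Dset_sub by blast
  have pI: "prob (Xc P m pre lab False \<inter> Xc P m pre lab True) = ?s * ?s"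
    using Gen_indep[OF _ _ _ XG[of False] XG[of True]] pX Dset_sub
    by (auto simp: Dset_def)
  have "prob (Hev P (Suc m) pre lab) = prob (Xc P m pre lab False) + prob (Xc P m pre lab True)
         - prob (Xc P m pre lab False \<inter> Xc P m pre lab True)"
    unfolding Hev_Suc using Xev by (intro measure_Un3) (auto simp: fmeasurable_eq_sets)
  then show ?case using pX pI by (simp add: Fq_def power2_eq_square)
qed

end




definition sh :: "(bool list \<Rightarrow> real) \<Rightarrow> bool list \<Rightarrow> real" where
  "sh h u = h (u @ [False]) + h (u @ [True])"

lemma space_seq: "space seq_space = UNIV"
  by (auto simp: seq_space_def space_PiM)

locale hsol =
  fixes h :: "bool list \<Rightarrow> real"
  assumes h01: "\<And>u. 0 \<le> h u \<and> h u \<le> 1"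
    and hrec: "\<And>u. h u = Fq (sh h u / 2)"
    and hroot: "h [] > 0"
begin

definition mm :: "bool list \<Rightarrow> real" where
  "mm u = (\<Prod>j<length u. h (take (Suc j) u) / sh h (take j u))"

definition ll :: "bool list \<Rightarrow> real" where
  "ll u = (\<Sum>j<length u. if u ! j then mm (take j u @ [False]) else 0)"

primrec pre :: "real \<Rightarrow> nat \<Rightarrow> bool list" where
  "pre t 0 = []"
| "pre t (Suc k) = pre t k @ [ll (pre t k) + mm (pre t k @ [False]) \<le> t]"

definition pt :: "real \<Rightarrow> nat \<Rightarrow> bool" where "pt t j = pre t (Suc j) ! j"

lemma mm_Nil[simp]: "mm [] = 1" by (simp add: mm_def)

lemma mm_snoc: "mm (u @ [c]) = mm u * (h (u @ [c]) / sh h u)"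
proof -
  have "mm (u @ [c]) = (\<Prod>j<Suc (length u). h (take (Suc j) (u @ [c])) / sh h (take j (u @ [c])))"
    by (simp add: mm_def)
  also have "\<dots> = (\<Prod>j<length u. h (take (Suc j) (u @ [c])) / sh h (take j (u @ [c]))) * (h (u @ [c]) / sh h u)"
    by (simp add: prod.lessThan_Suc)
  also have "(\<Prod>j<length u. h (take (Suc j) (u @ [c])) / sh h (take j (u @ [c]))) = mm u"
    unfolding mm_def by (intro prod.cong) auto
  finally show ?thesis .
qed

lemma sh_nonneg: "0 \<le> sh h u" using h01 by (simp add: sh_def add_nonneg_nonneg)

lemma mm_nonneg: "0 \<le> mm u"
  by (induction u rule: rev_induct) (auto simp: mm_snoc h01 sh_nonneg)

lemma h_pos_sh: "h u > 0 \<Longrightarrow> sh h u > 0"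
  using hrec[of u] sh_nonneg[of u] by (cases "sh h u = 0") (auto simp: Fq_def)

lemma mm_pos_h: "mm u > 0 \<Longrightarrow> h u > 0"
proof (induction u rule: rev_induct)
  case Nil then show ?case using hroot by simp
next
  case (snoc c u)
  then have "h (u @ [c]) \<noteq> 0" by (auto simp: mm_snoc)
  then show ?case using h01[of "u @ [c]"] by simp
qed

lemma mm_split: "mm (u @ [False]) + mm (u @ [True]) = mm u"
proof (cases "mm u = 0")
  case True then show ?thesis by (simp add: mm_snoc)
next
  case False
  then have "mm u > 0" using mm_nonneg[of u] by simp
  then have "sh h u > 0" using mm_pos_h h_pos_sh by blast
  have "mm u * (h (u @ [False]) / sh h u) + mm u * (h (u @ [True]) / sh h u) = mm u * (sh h u / sh h u)"
    by (simp only: sh_def add_divide_distrib distrib_left)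
  then show ?thesis using \<open>sh h u > 0\<close> by (simp only: mm_snoc) simp
qed

lemma ll_Nil[simp]: "ll [] = 0" by (simp add: ll_def)

lemma ll_snoc: "ll (u @ [c]) = ll u + (if c then mm (u @ [False]) else 0)"
proof -
  have "ll (u @ [c]) = (\<Sum>j<Suc (length u). if (u @ [c]) ! j then mm (take j (u @ [c]) @ [False]) else 0)"
    by (simp add: ll_def)
  also have "\<dots> = (\<Sum>j<length u. if (u @ [c]) ! j then mm (take j (u @ [c]) @ [False]) else 0) + (if c then mm (u @ [False]) else 0)"
    by (simp add: sum.lessThan_Suc)
  also have "(\<Sum>j<length u. if (u @ [c]) ! j then mm (take j (u @ [c]) @ [False]) else 0) = ll u"
    unfolding ll_def by (intro sum.cong) (auto simp: nth_append)
  finally show ?thesis .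
qed

lemma ll_nonneg: "0 \<le> ll u"
  by (induction u rule: rev_induct) (auto simp: ll_snoc mm_nonneg)

lemma ll_mm_le1: "ll u + mm u \<le> 1"
proof (induction u rule: rev_induct)
  case Nil then show ?case by simp
next
  case (snoc c u)
  have "mm (u @ [False]) + mm (u @ [True]) = mm u" by (rule mm_split)
  then show ?case using snoc mm_nonneg[of "u @ [False]"] mm_nonneg[of "u @ [True]"]
    by (cases c) (auto simp: ll_snoc)
qed

lemma pre_len[simp]: "length (pre t k) = k"
  by (induction k) auto

lemma pre_iff: "0 \<le> t \<Longrightarrow> t < 1 \<Longrightarrow> length u = k \<Longrightarrow> (pre t k = u \<longleftrightarrow> ll u \<le> t \<and> t < ll u + mm u)"
proof (induction k arbitrary: u)
  case 0 then show ?case by simp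
next
  case (Suc k)
  then obtain v c where u: "u = v @ [c]" and lv: "length v = k"
    by (metis append_butlast_last_id length_butlast diff_Suc_1 length_0_conv nat.distinct(1))
  have "pre t (Suc k) = u \<longleftrightarrow> pre t k = v \<and> c = (ll v + mm (v @ [False]) \<le> t)"
    using u by auto
  also have "\<dots> \<longleftrightarrow> (ll v \<le> t \<and> t < ll v + mm v) \<and> c = (ll v + mm (v @ [False]) \<le> t)"
    using Suc.IH[OF Suc.prems(1,2) lv] by simp
  also have "\<dots> \<longleftrightarrow> ll u \<le> t \<and> t < ll u + mm u"
    using mm_split[of v] mm_nonneg[of "v @ [False]"] mm_nonneg[of "v @ [True]"] u
    by (cases c) (auto simp: ll_snoc)
  finally show ?case .
qed

lemma pre_map: "pre t k = map (pt t) [0..<k]"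
  by (induction k) (auto simp: pt_def nth_append)

lemma pre_mm_pos: "0 \<le> t \<Longrightarrow> t < 1 \<Longrightarrow> mm (pre t k) > 0"
  using pre_iff[of t "pre t k" k] by simp

definition U :: "real measure" where "U = restrict_space lborel {0..<1}"

lemma U_space: "space U = {0..<1}" by (simp add: U_def)

lemma U_sets: "A \<subseteq> {0..<1} \<Longrightarrow> A \<in> sets lborel \<Longrightarrow> A \<in> sets U"
  unfolding U_def by (subst sets_restrict_space_iff) auto

lemma U_emeasure: "A \<subseteq> {0..<1} \<Longrightarrow> emeasure U A = emeasure lborel A"
  unfolding U_def by (rule emeasure_restrict_space) auto

lemma U_prob: "prob_space U"
  by (rule prob_spaceI) (simp add: U_space U_emeasure)

lemma pre_set: "length u = k \<Longrightarrow> {t \<in> space U. pre t k = u} = {ll u..<ll u + mm u}"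
  using pre_iff[of _ u k] ll_nonneg[of u] ll_mm_le1[of u] by (auto simp: U_space)

lemma pre_set_meas: "length u = k \<Longrightarrow> emeasure U {t \<in> space U. pre t k = u} = mm u"
  using pre_set[of u k] ll_nonneg[of u] ll_mm_le1[of u] mm_nonneg[of u]
  by (simp add: U_emeasure subset_iff)

lemma pre_set_sets: "{t \<in> space U. pre t k = u} \<in> sets U"
proof (cases "length u = k")
  case True
  have "{ll u..<ll u + mm u} \<in> sets U"
    using ll_nonneg[of u] ll_mm_le1[of u] by (intro U_sets) auto
  then show ?thesis using pre_set[OF True] by simp
next
  case False
  then have e: "{t \<in> space U. pre t k = u} = {}" by auto
  show ?thesis unfolding e by simp
qed

lemma pre_measurable: "(\<lambda>t. pre t k) \<in> U \<rightarrow>\<^sub>M count_space UNIV"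
proof (subst measurable_count_space_eq2_countable, safe)
  fix u :: "bool list"
  have "(\<lambda>t. pre t k) -` {u} \<inter> space U = {t \<in> space U. pre t k = u}" by auto
  then show "(\<lambda>t. pre t k) -` {u} \<inter> space U \<in> sets U" using pre_set_sets by simp
qed auto

lemma pt_measurable: "(\<lambda>t. pt t j) \<in> U \<rightarrow>\<^sub>M count_space UNIV"
proof -
  have "(\<lambda>u. u ! j) \<in> count_space UNIV \<rightarrow>\<^sub>M (count_space UNIV :: bool measure)" by simp
  from measurable_comp[OF pre_measurable[of "Suc j"] this] show ?thesis
    by (simp add: pt_def comp_def)
qed

lemma ptfun_measurable: "(\<lambda>t. pt t) \<in> U \<rightarrow>\<^sub>M seq_space"
  unfolding seq_space_def
  by (rule measurable_PiM_single'[where f="\<lambda>i t. pt t i", simplified])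
     (auto intro: pt_measurable)

definition mu :: "(nat \<Rightarrow> bool) measure" where "mu = distr U seq_space (\<lambda>t. pt t)"

lemma mu_prob: "prob_space mu"
  unfolding mu_def by (rule prob_space.prob_space_distr[OF U_prob ptfun_measurable])

lemma mu_sets: "sets mu = sets seq_space" by (simp add: mu_def)


end

lemma coord_meas: "(\<lambda>a. a k) \<in> seq_space \<rightarrow>\<^sub>M count_space UNIV"
  unfolding seq_space_def by (rule measurable_component_singleton) simp

lemma mapk_meas: "(\<lambda>a. map a [0..<k]) \<in> seq_space \<rightarrow>\<^sub>M count_space UNIV"
proof (induction k)
  case 0 then show ?case by simp
next
  case (Suc k)
  have "(\<lambda>a. (\<lambda>u a. u @ [a k]) (map a [0..<k]) a) \<in> seq_space \<rightarrow>\<^sub>M count_space UNIV"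
  proof (rule measurable_compose_countable'[OF _ Suc.IH])
    fix u :: "bool list"
    have "(\<lambda>b. u @ [b]) \<in> count_space UNIV \<rightarrow>\<^sub>M (count_space UNIV :: bool list measure)" by simp
    from measurable_comp[OF coord_meas[of k] this]
    show "(\<lambda>a. u @ [a k]) \<in> seq_space \<rightarrow>\<^sub>M count_space UNIV" by (simp add: comp_def)
  qed simp
  then show ?case by simp
qed

lemma cyl_sets: "{a. map a [0..<k] = u} \<in> sets seq_space"
proof -
  have "(\<lambda>a. map a [0..<k]) -` {u} \<inter> space seq_space \<in> sets seq_space"
    by (rule measurable_sets[OF mapk_meas]) simp
  moreover have "(\<lambda>a. map a [0..<k]) -` {u} \<inter> space seq_space = {a. map a [0..<k] = u}"
    by (auto simp: space_seq)
  ultimately show ?thesis by simp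
qed

context hsol begin

lemma mu_cyl: "length u = k \<Longrightarrow> emeasure mu {a. map a [0..<k] = u} = mm u"
proof -
  assume "length u = k"
  have "emeasure mu {a. map a [0..<k] = u} = emeasure U ((\<lambda>t. pt t) -` {a. map a [0..<k] = u} \<inter> space U)"
    unfolding mu_def by (rule emeasure_distr[OF ptfun_measurable cyl_sets])
  also have "(\<lambda>t. pt t) -` {a. map a [0..<k] = u} \<inter> space U = {t \<in> space U. pre t k = u}"
    by (auto simp: pre_map)
  finally show ?thesis using pre_set_meas[OF \<open>length u = k\<close>] by simp
qed


end

lemma ennreal_const_suminf_top:
  assumes "c > 0" shows "(\<Sum>k::nat. ennreal c) = \<infinity>"
proof (rule ccontr)
  assume "(\<Sum>k::nat. ennreal c) \<noteq> \<infinity>"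
  then have "summable (\<lambda>k::nat. c)" using summable_suminf_not_top[of "\<lambda>_. c"] assms by simp
  then show False using assms by (simp add: summable_const_iff)
qed

lemma map_eq_Suc_iff: "map b [0..<Suc k] = map a [0..<Suc k] \<longleftrightarrow> (\<forall>j\<le>k. a j = b j)"
  unfolding map_eq_conv by (auto simp del: upt_Suc simp: less_Suc_eq_le)

lemma log_kernel_sum:
  "log_kernel a b = (\<Sum>k. ennreal (ln 2) * indicator {b. map b [0..<Suc k] = map a [0..<Suc k]} b)"
proof (cases "a = b")
  case True
  then have "(\<Sum>k. ennreal (ln 2) * indicator {b. map b [0..<Suc k] = map a [0..<Suc k]} b) = (\<Sum>k::nat. ennreal (ln 2))"
    by simp
  also have "\<dots> = \<infinity>" by (rule ennreal_const_suminf_top) simp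
  finally show ?thesis using True by (simp add: log_kernel_def)
next
  case False
  define N where "N = (LEAST n. a n \<noteq> b n)"
  have ex: "\<exists>n. a n \<noteq> b n" using False by auto
  have iff: "(\<forall>j\<le>k. a j = b j) \<longleftrightarrow> k < N" for k
  proof
    assume H: "\<forall>j\<le>k. a j = b j"
    show "k < N"
    proof (rule ccontr)
      assume "\<not> k < N"
      then have "N \<le> k" by simp
      moreover have "a N \<noteq> b N" unfolding N_def by (rule LeastI_ex[OF ex])
      ultimately show False using H by auto
    qed
  next
    assume "k < N"
    show "\<forall>j\<le>k. a j = b j"
    proof (intro allI impI)
      fix j assume "j \<le> k"
      then have "j < N" using \<open>k < N\<close> by simp
      then show "a j = b j" using not_less_Least[of j "\<lambda>n. a n \<noteq> b n"] unfolding N_def by auto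
    qed
  qed
  have "(\<Sum>k. ennreal (ln 2) * indicator {b. map b [0..<Suc k] = map a [0..<Suc k]} b)
      = (\<Sum>k. if k < N then ennreal (ln 2) else 0)"
  proof (intro suminf_cong)
    fix k
    have mem: "(b \<in> {b. map b [0..<Suc k] = map a [0..<Suc k]}) = (k < N)"
      by (simp only: mem_Collect_eq map_eq_Suc_iff iff)
    have "indicator {b. map b [0..<Suc k] = map a [0..<Suc k]} b = (if k < N then 1 else (0::ennreal))"
      unfolding indicator_def mem by simp
    then show "ennreal (ln 2) * indicator {b. map b [0..<Suc k] = map a [0..<Suc k]} b = (if k < N then ennreal (ln 2) else 0)"
      by simp
  qed
  also have "\<dots> = (\<Sum>k<N. if k < N then ennreal (ln 2) else 0)"
    by (rule suminf_finite) auto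
  also have "\<dots> = of_nat N * ennreal (ln 2)" by simp
  also have "\<dots> = ennreal (real N * ln 2)"
    by (simp add: ennreal_mult ennreal_of_nat_eq_real_of_nat)
  finally show ?thesis using False by (simp add: log_kernel_def N_def)
qed

lemma finite_L: "finite {u::bool list. length u = k}"
  using finite_lists_length_eq[of "UNIV::bool set" k] by simp

lemma sum_L_Suc:
  "(\<Sum>u\<in>{u::bool list. length u = Suc k}. g u) = (\<Sum>u\<in>{u. length u = k}. g (u @ [False]) + g (u @ [True]))"
proof -
  let ?L = "{u::bool list. length u = k}"
  have e: "{u::bool list. length u = Suc k} = (\<lambda>u. u @ [False]) ` ?L \<union> (\<lambda>u. u @ [True]) ` ?L"
  proof (intro set_eqI iffI)
    fix u :: "bool list" assume "u \<in> {u. length u = Suc k}"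
    then have "u = butlast u @ [last u]" "length (butlast u) = k"
      by (auto intro!: append_butlast_last_id[symmetric])
    then have "u \<in> (\<lambda>v. v @ [last u]) ` ?L" by (intro image_eqI[of u _ "butlast u"]) auto
    then show "u \<in> (\<lambda>u. u @ [False]) ` ?L \<union> (\<lambda>u. u @ [True]) ` ?L"
      by (cases "last u") auto
  qed auto
  have "(\<Sum>u\<in>{u::bool list. length u = Suc k}. g u) =
        (\<Sum>u\<in>(\<lambda>u. u @ [False]) ` ?L. g u) + (\<Sum>u\<in>(\<lambda>u. u @ [True]) ` ?L. g u)"
    unfolding e by (rule sum.union_disjoint) (auto simp: finite_L)
  also have "\<dots> = (\<Sum>u\<in>?L. g (u @ [False])) + (\<Sum>u\<in>?L. g (u @ [True]))"
    by (subst (1 2) sum.reindex) (auto simp: inj_on_def)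
  finally show ?thesis by (simp add: sum.distrib)
qed

lemma key_ineq:
  fixes s :: real assumes "0 < s" "s \<le> 2"
  shows "1/4 + 1/s \<le> 1 / (s - s^2/4)"
proof -
  have p: "s - s^2/4 = s * (4 - s) / 4" by (simp add: power2_eq_square field_simps)
  have q: "0 < s * (4 - s)" using assms by simp
  have "1/4 + 1/s = (s + 4) * (4 - s) / (4 * (s * (4 - s)))"
    using assms by (simp add: field_simps)
  also have "\<dots> \<le> 16 / (4 * (s * (4 - s)))"
    using q by (intro divide_right_mono) (auto simp: algebra_simps power2_eq_square)
  also have "\<dots> = 4 / (s * (4 - s))" by simp
  also have "\<dots> = 1 / (s - s^2/4)" unfolding p by simp
  finally show ?thesis .
qed

context hsol begin

lemma sh_le2: "sh h u \<le> 2" using h01[of "u@[False]"] h01[of "u@[True]"] by (simp add: sh_def)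

lemma per_u: "mm u ^ 2 / 4 + (mm (u@[False]) ^ 2 / h (u@[False]) + mm (u@[True]) ^ 2 / h (u@[True]))
   \<le> mm u ^ 2 / h u"
proof (cases "mm u = 0")
  case True
  then show ?thesis using h01[of u] by (simp add: mm_snoc)
next
  case False
  then have mpos: "mm u > 0" using mm_nonneg[of u] by simp
  then have hpos: "h u > 0" by (rule mm_pos_h)
  define s where "s = sh h u"
  have spos: "s > 0" unfolding s_def using h_pos_sh[OF hpos] .
  have s2: "s \<le> 2" unfolding s_def by (rule sh_le2)
  have trm: "mm (u@[c]) ^ 2 / h (u@[c]) = mm u ^ 2 * h (u@[c]) / s^2" for c
  proof (cases "h (u@[c]) = 0")
    case True then show ?thesis by (simp add: mm_snoc)
  next
    case False then show ?thesis using spos by (simp add: mm_snoc s_def[symmetric] power2_eq_square field_simps)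
  qed
  have "mm (u@[False]) ^ 2 / h (u@[False]) + mm (u@[True]) ^ 2 / h (u@[True]) = mm u ^ 2 * s / s^2"
    unfolding trm by (simp add: s_def sh_def add_divide_distrib distrib_left)
  also have "\<dots> = mm u ^ 2 / s" using spos by (simp add: power2_eq_square)
  finally have e: "mm (u@[False]) ^ 2 / h (u@[False]) + mm (u@[True]) ^ 2 / h (u@[True]) = mm u ^ 2 / s" .
  have hu: "h u = s - s^2/4" using hrec[of u] by (simp add: Fq_def s_def power2_eq_square field_simps)
  have "mm u ^ 2 / 4 + mm u ^ 2 / s = mm u ^ 2 * (1/4 + 1/s)" by (simp add: field_simps)
  also have "\<dots> \<le> mm u ^ 2 * (1 / (s - s^2/4))"
    using key_ineq[OF spos s2] by (intro mult_left_mono) auto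
  also have "\<dots> = mm u ^ 2 / h u" using hu by simp
  finally show ?thesis using e by simp
qed

definition SS :: "nat \<Rightarrow> real" where "SS k = (\<Sum>u\<in>{u::bool list. length u = k}. mm u ^ 2)"
definition QQ :: "nat \<Rightarrow> real" where "QQ k = (\<Sum>u\<in>{u::bool list. length u = k}. mm u ^ 2 / h u)"

lemma SS_nonneg: "0 \<le> SS k" unfolding SS_def by (intro sum_nonneg) auto
lemma QQ_nonneg: "0 \<le> QQ k" unfolding QQ_def using h01 by (intro sum_nonneg divide_nonneg_nonneg) auto

lemma QQ_step: "SS k / 4 + QQ (Suc k) \<le> QQ k"
proof -
  have "SS k / 4 + QQ (Suc k) = (\<Sum>u\<in>{u::bool list. length u = k}. mm u ^ 2 / 4 +
      (mm (u@[False]) ^ 2 / h (u@[False]) + mm (u@[True]) ^ 2 / h (u@[True])))"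
    unfolding SS_def QQ_def sum_L_Suc by (simp add: sum_divide_distrib sum.distrib)
  also have "\<dots> \<le> QQ k" unfolding QQ_def by (intro sum_mono per_u)
  finally show ?thesis .
qed

lemma QQ0: "QQ 0 = 1 / h []" by (simp add: QQ_def)

lemma SS_partial: "(\<Sum>j<n. SS j) \<le> 4 / h []"
proof -
  have "(\<Sum>j<n. SS j) / 4 + QQ n \<le> QQ 0" for n
  proof (induction n)
    case 0 then show ?case by simp
  next
    case (Suc n) then show ?case using QQ_step[of n] by (simp add: add_divide_distrib)
  qed
  from this[of n] QQ_nonneg[of n] show ?thesis unfolding QQ0 by simp
qed

end


context hsol begin

lemma inner_int: "(\<integral>\<^sup>+b. log_kernel a b \<partial>mu) = (\<Sum>k. ennreal (ln 2) * ennreal (mm (map a [0..<Suc k])))"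
proof -
  have S: "{b. map b [0..<Suc k] = map a [0..<Suc k]} \<in> sets mu" for k
    unfolding mu_sets by (rule cyl_sets)
  have "(\<integral>\<^sup>+b. log_kernel a b \<partial>mu) =
     (\<integral>\<^sup>+b. (\<Sum>k. ennreal (ln 2) * indicator {b. map b [0..<Suc k] = map a [0..<Suc k]} b) \<partial>mu)"
    by (simp only: log_kernel_sum)
  also have "\<dots> = (\<Sum>k. \<integral>\<^sup>+b. ennreal (ln 2) * indicator {b. map b [0..<Suc k] = map a [0..<Suc k]} b \<partial>mu)"
    by (rule nn_integral_suminf) (intro borel_measurable_times_ennreal borel_measurable_const borel_measurable_indicator S)
  also have "\<dots> = (\<Sum>k. ennreal (ln 2) * ennreal (mm (map a [0..<Suc k])))"
  proof (intro suminf_cong)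
    fix k
    have "(\<integral>\<^sup>+b. ennreal (ln 2) * indicator {b. map b [0..<Suc k] = map a [0..<Suc k]} b \<partial>mu)
        = ennreal (ln 2) * emeasure mu {b. map b [0..<Suc k] = map a [0..<Suc k]}"
      by (rule nn_integral_cmult_indicator[OF S])
    also have "emeasure mu {b. map b [0..<Suc k] = map a [0..<Suc k]} = ennreal (mm (map a [0..<Suc k]))"
      by (rule mu_cyl) simp
    finally show "(\<integral>\<^sup>+b. ennreal (ln 2) * indicator {b. map b [0..<Suc k] = map a [0..<Suc k]} b \<partial>mu)
        = ennreal (ln 2) * ennreal (mm (map a [0..<Suc k]))" .
  qed
  finally show ?thesis .
qed

lemma int_pre: "(\<integral>\<^sup>+t. c (pre t K) \<partial>U) = (\<Sum>u\<in>{u. length u = K}. c u * ennreal (mm u))"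
proof -
  have "(\<integral>\<^sup>+t. c (pre t K) \<partial>U) = (\<integral>\<^sup>+t. (\<Sum>u\<in>{u. length u = K}. c u * indicator {t \<in> space U. pre t K = u} t) \<partial>U)"
  proof (rule nn_integral_cong)
    fix t assume t: "t \<in> space U"
    have "(\<Sum>u\<in>{u. length u = K}. c u * indicator {t \<in> space U. pre t K = u} t)
        = (\<Sum>u\<in>{u. length u = K}. if pre t K = u then c u else 0)"
      using t by (intro sum.cong) (auto simp: indicator_def)
    also have "\<dots> = c (pre t K)" using finite_L[of K] by (simp add: sum.delta)
    finally show "c (pre t K) = (\<Sum>u\<in>{u. length u = K}. c u * indicator {t \<in> space U. pre t K = u} t)" by simp
  qed
  also have "\<dots> = (\<Sum>u\<in>{u. length u = K}. \<integral>\<^sup>+t. c u * indicator {t \<in> space U. pre t K = u} t \<partial>U)"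
    by (rule nn_integral_sum) (intro borel_measurable_times_ennreal borel_measurable_const borel_measurable_indicator pre_set_sets)
  also have "\<dots> = (\<Sum>u\<in>{u. length u = K}. c u * ennreal (mm u))"
    by (intro sum.cong refl) (simp add: nn_integral_cmult_indicator[OF pre_set_sets] pre_set_meas)
  finally show ?thesis .
qed

lemma energy_eq: "log_energy mu = (\<Sum>k. ennreal (ln 2 * SS (Suc k)))"
proof -
  have mk: "(\<lambda>a. ennreal (ln 2) * ennreal (mm (map a [0..<Suc k]))) \<in> borel_measurable mu" for k
  proof -
    have "(\<lambda>u. ennreal (ln 2) * ennreal (mm u)) \<in> count_space UNIV \<rightarrow>\<^sub>M (borel :: ennreal measure)" by simp
    from measurable_comp[OF mapk_meas[of "Suc k"] this]
    have "(\<lambda>a. ennreal (ln 2) * ennreal (mm (map a [0..<Suc k]))) \<in> seq_space \<rightarrow>\<^sub>M borel" by (simp add: comp_def)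
    then show ?thesis by (subst measurable_cong_sets[OF mu_sets refl])
  qed
  have "log_energy mu = (\<integral>\<^sup>+a. (\<Sum>k. ennreal (ln 2) * ennreal (mm (map a [0..<Suc k]))) \<partial>mu)"
    unfolding log_energy_def by (simp only: inner_int)
  also have "\<dots> = (\<Sum>k. \<integral>\<^sup>+a. ennreal (ln 2) * ennreal (mm (map a [0..<Suc k])) \<partial>mu)"
    by (rule nn_integral_suminf[OF mk])
  also have "\<dots> = (\<Sum>k. ennreal (ln 2 * SS (Suc k)))"
  proof (intro suminf_cong)
    fix k
    have "(\<integral>\<^sup>+a. ennreal (ln 2) * ennreal (mm (map a [0..<Suc k])) \<partial>mu)
        = (\<integral>\<^sup>+t. ennreal (ln 2) * ennreal (mm (map (pt t) [0..<Suc k])) \<partial>U)"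
      unfolding mu_def by (rule nn_integral_distr[OF ptfun_measurable]) (use mk[of k] in \<open>simp add: mu_def\<close>)
    also have "\<dots> = (\<integral>\<^sup>+t. ennreal (ln 2) * ennreal (mm (pre t (Suc k))) \<partial>U)"
      by (simp only: pre_map)
    also have "\<dots> = (\<Sum>u\<in>{u. length u = Suc k}. ennreal (ln 2) * ennreal (mm u) * ennreal (mm u))"
      by (rule int_pre)
    also have "\<dots> = (\<Sum>u\<in>{u. length u = Suc k}. ennreal (ln 2 * mm u ^ 2))"
      using mm_nonneg by (intro sum.cong refl) (simp add: ennreal_mult power2_eq_square mult.assoc)
    also have "\<dots> = ennreal (\<Sum>u\<in>{u. length u = Suc k}. ln 2 * mm u ^ 2)"
      by (rule sum_ennreal) simp
    also have "\<dots> = ennreal (ln 2 * SS (Suc k))" by (simp add: SS_def sum_distrib_left)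
    finally show "(\<integral>\<^sup>+a. ennreal (ln 2) * ennreal (mm (map a [0..<Suc k])) \<partial>mu) = ennreal (ln 2 * SS (Suc k))" .
  qed
  finally show ?thesis .
qed

lemma energy_finite: "log_energy mu \<noteq> \<infinity>"
proof -
  have nn: "0 \<le> ln 2 * SS (Suc k)" for k using SS_nonneg by simp
  have "summable (\<lambda>k. ln 2 * SS (Suc k))"
  proof (rule summableI_nonneg_bounded[OF nn])
    fix n
    have "(\<Sum>k<n. ln 2 * SS (Suc k)) = ln 2 * (\<Sum>k<n. SS (Suc k))" by (simp add: sum_distrib_left)
    also have "\<dots> \<le> ln 2 * (\<Sum>j<Suc n. SS j)"
    proof -
      have "(\<Sum>j<Suc n. SS j) = SS 0 + (\<Sum>k<n. SS (Suc k))" by (rule sum.lessThan_Suc_shift)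
      then show ?thesis using SS_nonneg[of 0] by (intro mult_left_mono) auto
    qed
    also have "\<dots> \<le> ln 2 * (4 / h [])" by (intro mult_left_mono SS_partial) auto
    finally show "(\<Sum>k<n. ln 2 * SS (Suc k)) \<le> ln 2 * (4 / h [])" .
  qed
  then show ?thesis unfolding energy_eq using ennreal_suminf_neq_top nn by auto
qed

lemma mu_AE: "AE a in mu. \<forall>k. 0 < h (map a [0..<k])"
proof -
  have P: "{a \<in> space seq_space. \<forall>k. 0 < h (map a [0..<k])} \<in> sets seq_space"
  proof -
    have "{a \<in> space seq_space. \<forall>k. 0 < h (map a [0..<k])} =
          (\<Inter>k. (\<lambda>a. map a [0..<k]) -` {u. 0 < h u} \<inter> space seq_space)" by auto
    also have "\<dots> \<in> sets seq_space"
    proof -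
      have top: "UNIV \<in> sets seq_space" using sets.top[of seq_space] by (simp add: space_seq)
      show ?thesis by (intro sets.countable_INT'' measurable_sets[OF mapk_meas]) (auto simp: space_seq top)
    qed
    finally show ?thesis .
  qed
  have "AE t in U. \<forall>k. 0 < h (map (pt t) [0..<k])"
  proof (rule AE_I2)
    fix t assume "t \<in> space U"
    then have "0 \<le> t" "t < 1" by (auto simp: U_space)
    then show "\<forall>k. 0 < h (map (pt t) [0..<k])"
      using pre_mm_pos mm_pos_h by (simp add: pre_map[symmetric])
  qed
  then show ?thesis unfolding mu_def by (subst AE_distr_iff[OF ptfun_measurable P])
qed

lemma good_measure: "\<exists>\<mu>. prob_space \<mu> \<and> sets \<mu> = sets seq_space \<and> (AE a in \<mu>. \<forall>k. 0 < h (map a [0..<k])) \<and> log_energy \<mu> \<noteq> \<infinity>"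
  using mu_prob mu_sets mu_AE energy_finite by blast

end


lemma Fq_mono: assumes "0 \<le> x" "x \<le> y" "y \<le> 1" shows "Fq x \<le> Fq y"
proof -
  have "0 \<le> (y - x) * (2 - x - y)" using assms by (intro mult_nonneg_nonneg) auto
  then show ?thesis unfolding Fq_def power2_eq_square by (simp add: algebra_simps)
qed

lemma Fq_range: assumes "0 \<le> x" "x \<le> 1" shows "0 \<le> Fq x \<and> Fq x \<le> 1"
proof -
  have "Fq x = x * (2 - x)" unfolding Fq_def power2_eq_square by (simp add: algebra_simps)
  moreover have "1 - Fq x = (1 - x)^2" unfolding Fq_def power2_eq_square by (simp add: algebra_simps)
  moreover have "0 \<le> x * (2 - x)" using assms by (intro mult_nonneg_nonneg) auto
  moreover have "0 \<le> (1 - x)^2" by simp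
  ultimately show ?thesis by linarith
qed

definition prefclosed :: "bool list set \<Rightarrow> bool" where
  "prefclosed P \<longleftrightarrow> (\<forall>u c. u @ [c] \<in> P \<longrightarrow> u \<in> P)"

lemma gq_range: "0 \<le> gq P n u \<and> gq P n u \<le> 1"
proof (induction n arbitrary: u)
  case 0 then show ?case by simp
next
  case (Suc n)
  have "0 \<le> (gq P n (u @ [False]) + gq P n (u @ [True])) / 2" "(gq P n (u @ [False]) + gq P n (u @ [True])) / 2 \<le> 1"
    using Suc.IH[of "u @ [False]"] Suc.IH[of "u @ [True]"] by auto
  then show ?case using Fq_range by simp
qed

lemma gq_dec: assumes "prefclosed P" shows "gq P (Suc n) u \<le> gq P n u"
proof (induction n arbitrary: u)
  case 0
  show ?case
  proof (cases "u \<in> P")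
    case True then show ?thesis using gq_range[of P 1 u] by simp
  next
    case False
    then have "u @ [c] \<notin> P" for c using assms unfolding prefclosed_def by blast
    then show ?thesis using False by (simp add: Fq_def)
  qed
next
  case (Suc n)
  have a: "(gq P (Suc n) (u @ [False]) + gq P (Suc n) (u @ [True])) / 2 \<le> (gq P n (u @ [False]) + gq P n (u @ [True])) / 2"
    using Suc.IH[of "u @ [False]"] Suc.IH[of "u @ [True]"] by simp
  have b: "0 \<le> (gq P (Suc n) (u @ [False]) + gq P (Suc n) (u @ [True])) / 2"
    using gq_range[of P "Suc n" "u @ [False]"] gq_range[of P "Suc n" "u @ [True]"] by simp
  have c: "(gq P n (u @ [False]) + gq P n (u @ [True])) / 2 \<le> 1"
    using gq_range[of P n "u @ [False]"] gq_range[of P n "u @ [True]"] by simp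
  show ?case using Fq_mono[OF b a c] by (simp del: gq.simps add: gq.simps(2)[of P "Suc n"] gq.simps(2)[of P n])
qed

definition hl :: "bool list set \<Rightarrow> bool list \<Rightarrow> real" where
  "hl P u = lim (\<lambda>n. gq P n u)"

lemma gq_decseq: "prefclosed P \<Longrightarrow> decseq (\<lambda>n. gq P n u)"
  using gq_dec unfolding decseq_Suc_iff by blast

lemma hl_lim: assumes "prefclosed P" shows "(\<lambda>n. gq P n u) \<longlonglongrightarrow> hl P u"
proof -
  have "\<forall>i. 0 \<le> gq P i u" using gq_range by blast
  then obtain L where "(\<lambda>n. gq P n u) \<longlonglongrightarrow> L" "\<forall>i. L \<le> gq P i u"
    by (rule decseq_convergent[OF gq_decseq[OF assms]])
  then have "convergent (\<lambda>n. gq P n u)" by (intro convergentI)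
  then show ?thesis unfolding hl_def convergent_LIMSEQ_iff .
qed

lemma hl_le: "prefclosed P \<Longrightarrow> hl P u \<le> gq P n u"
  using decseq_ge[OF gq_decseq hl_lim] by blast

lemma hl_nonneg: "prefclosed P \<Longrightarrow> 0 \<le> hl P u"
  using LIMSEQ_le_const[OF hl_lim, of P 0 u] gq_range by blast

lemma hl_rec: assumes "prefclosed P" shows "hl P u = Fq (sh (hl P) u / 2)"
proof -
  have 1: "(\<lambda>n. gq P (Suc n) u) \<longlonglongrightarrow> hl P u" using hl_lim[OF assms] by (rule LIMSEQ_Suc)
  have "(\<lambda>n. Fq ((gq P n (u @ [False]) + gq P n (u @ [True])) / 2)) \<longlonglongrightarrow> Fq (sh (hl P) u / 2)"
    unfolding Fq_def sh_def
    by (intro tendsto_intros hl_lim[OF assms]) simp_all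
  then have 2: "(\<lambda>n. gq P (Suc n) u) \<longlonglongrightarrow> Fq (sh (hl P) u / 2)" by simp
  show ?thesis using LIMSEQ_unique[OF 1 2] .
qed

lemma hl_pos_P: "prefclosed P \<Longrightarrow> hl P u > 0 \<Longrightarrow> u \<in> P"
  using hl_le[of P u 0] by (auto split: if_splits)

lemma hl_hsol: assumes "prefclosed P" "hl P [] > 0" shows "hsol (hl P)"
proof
  fix u
  show "0 \<le> hl P u \<and> hl P u \<le> 1" using hl_nonneg[OF assms(1)] hl_le[OF assms(1), of u 0] by (auto split: if_splits)
  show "hl P u = Fq (sh (hl P) u / 2)" by (rule hl_rec[OF assms(1)])
qed (rule assms(2))

definition prefs :: "(nat \<Rightarrow> bool) set \<Rightarrow> bool list set" where
  "prefs E = {u. \<exists>a\<in>E. u = map a [0..<length u]}"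

lemma prefs_closed: "prefclosed (prefs E)"
  unfolding prefclosed_def prefs_def by auto

definition dval :: "real \<Rightarrow> (nat \<Rightarrow> bool) \<Rightarrow> nat \<Rightarrow> real" where
  "dval r a j = (if a j then 1 else 0) * r ^ Suc j"

lemma geo_sums: fixes r :: real assumes "0 < r" "r < 1" shows "(\<lambda>j. r ^ Suc j) sums (r / (1 - r))"
proof -
  have "(\<lambda>j. r ^ j) sums (1 / (1 - r))" using geometric_sums[of r] assms by simp
  from sums_mult[OF this, of r] show ?thesis by simp
qed

lemma dval_bound: "0 < r \<Longrightarrow> 0 \<le> dval r a j \<and> dval r a j \<le> r ^ Suc j"
  by (simp add: dval_def)

lemma dval_summable: assumes "0 < r" "r < 1" shows "summable (dval r a)"
  by (rule summable_comparison_test'[OF sums_summable[OF geo_sums[OF assms]], of 0])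
     (use dval_bound[OF assms(1)] in auto)

lemma dval_diff_bound:
  assumes r: "0 < r" "r < 1" and ab: "\<forall>j<k. a j = b j"
  shows "\<bar>suminf (dval r a) - suminf (dval r b)\<bar> \<le> r ^ k * (r / (1 - r))"
proof -
  define f where "f j = dval r a j - dval r b j" for j
  have sf: "summable f" unfolding f_def using dval_summable[OF r] by (intro summable_diff)
  have "suminf (dval r a) - suminf (dval r b) = suminf f"
    unfolding f_def by (rule suminf_diff[OF dval_summable[OF r] dval_summable[OF r]])
  also have "\<dots> = (\<Sum>n. f (n + k)) + (\<Sum>i<k. f i)" by (rule suminf_split_initial_segment[OF sf])
  also have "(\<Sum>i<k. f i) = 0" using ab by (simp add: f_def dval_def)
  finally have e: "suminf (dval r a) - suminf (dval r b) = (\<Sum>n. f (n + k))" by simp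
  have gs: "(\<lambda>n. r ^ k * r ^ Suc n) sums (r ^ k * (r / (1 - r)))" by (rule sums_mult[OF geo_sums[OF r]])
  have "norm (\<Sum>n. f (n + k)) \<le> (\<Sum>n. r ^ k * r ^ Suc n)"
  proof (rule norm_suminf_le)
    fix n
    have "\<bar>f (n + k)\<bar> \<le> r ^ Suc (n + k)" using dval_bound[OF r(1), of a "n+k"] dval_bound[OF r(1), of b "n+k"]
      unfolding f_def by linarith
    then show "norm (f (n + k)) \<le> r ^ k * r ^ Suc n" by (simp add: power_add mult_ac)
  qed (rule sums_summable[OF gs])
  then show ?thesis using e sums_unique[OF gs] by simp
qed

lemma expansions_closed:
  assumes r: "0 < r" "r < 1" and H: "\<forall>k. map a [0..<k] \<in> prefs (expansions r x)"
  shows "a \<in> expansions r x"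
proof -
  have ex: "expansions r x = {a. x = suminf (dval r a)}" unfolding expansions_def dval_def by simp
  define C where "C = r / (1 - r)"
  have Cpos: "C > 0" using r by (simp add: C_def)
  have bd: "\<bar>suminf (dval r a) - x\<bar> \<le> r ^ k * C" for k
  proof -
    obtain b where b: "b \<in> expansions r x" "map a [0..<k] = map b [0..<k]"
      using H[rule_format, of k] unfolding prefs_def by auto
    then have "\<forall>j<k. a j = b j" by (simp add: map_eq_conv)
    from dval_diff_bound[OF r this] b(1) show ?thesis unfolding ex C_def by simp
  qed
  have "suminf (dval r a) = x"
  proof (rule ccontr)
    assume "suminf (dval r a) \<noteq> x"
    then have "\<bar>suminf (dval r a) - x\<bar> / C > 0" using Cpos by simp
    then obtain k where "r ^ k < \<bar>suminf (dval r a) - x\<bar> / C" using real_arch_pow_inv r(2) by blast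
    then have "r ^ k * C < \<bar>suminf (dval r a) - x\<bar>" using Cpos by (simp add: pos_less_divide_eq)
    then show False using bd[of k] by simp
  qed
  then show ?thesis unfolding ex by simp
qed

lemma path_hit:
  assumes "x = coding_map r \<alpha> \<omega>"
  shows "hitr \<alpha> (prefs (expansions r x)) n [] []"
proof -
  define a where "a j = \<alpha> (prefix_word \<omega> (Suc j))" for j
  have aE: "a \<in> expansions r x" unfolding expansions_def a_def assms coding_map_def by simp
  have "hitr \<alpha> (prefs (expansions r x)) m (prefix_word \<omega> k) (map a [0..<k])" for m k
  proof (induction m arbitrary: k)
    case 0 then show ?case using aE by (auto simp: prefs_def)
  next
    case (Suc m)
    have "prefix_word \<omega> k @ [\<omega> k] = prefix_word \<omega> (Suc k)" by (simp add: prefix_word_def)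
    moreover have "map a [0..<k] @ [\<alpha> (prefix_word \<omega> (Suc k))] = map a [0..<Suc k]" by (simp add: a_def)
    ultimately show ?case using Suc.IH[of "Suc k"] by (auto intro!: exI[of _ "\<omega> k"])
  qed
  from this[of n 0] show ?thesis by (simp add: prefix_word_def)
qed

lemma coding_map_range:
  assumes r: "0 < r" "r < 1"
  shows "coding_map r \<alpha> \<omega> \<in> {0..r/(1-r)}"
proof -
  let ?f = "\<lambda>j. (if \<alpha> (prefix_word \<omega> (Suc j)) then 1 else 0) * r ^ Suc j"
  have b: "0 \<le> ?f j \<and> ?f j \<le> r ^ Suc j" for j using r by simp
  have s: "summable ?f"
    by (rule summable_comparison_test'[OF sums_summable[OF geo_sums[OF r]], of 0]) (use b in auto)
  have "0 \<le> suminf ?f" using b by (intro suminf_nonneg[OF s]) auto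
  moreover have "suminf ?f \<le> suminf (\<lambda>j. r ^ Suc j)"
    by (rule suminf_le[OF _ s sums_summable[OF geo_sums[OF r]]]) (use b in blast)
  moreover have "suminf (\<lambda>j. r ^ Suc j) = r / (1 - r)" using sums_unique[OF geo_sums[OF r]] by simp
  ultimately show ?thesis unfolding coding_map_def by simp
qed

context binmodel begin

lemma point_null:
  assumes r: "0 < r" "r < 1" and zc: "zero_log_capacity (expansions r x)"
  shows "\<exists>N\<in>null_sets M. {w \<in> space M. x \<in> attractor r (\<lambda>v. A v w)} \<subseteq> N"
proof -
  define P where "P = prefs (expansions r x)"
  have pc: "prefclosed P" unfolding P_def by (rule prefs_closed)
  have h0: "hl P [] = 0"
  proof (rule ccontr)
    assume "hl P [] \<noteq> 0"
    then have pos: "hl P [] > 0" using hl_nonneg[OF pc, of "[]"] by simp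
    interpret hs: hsol "hl P" by (rule hl_hsol[OF pc pos])
    obtain \<mu> where mu: "prob_space \<mu>" "sets \<mu> = sets seq_space"
      "AE a in \<mu>. \<forall>k. 0 < hl P (map a [0..<k])" "log_energy \<mu> \<noteq> \<infinity>"
      using hs.good_measure by blast
    have "AE a in \<mu>. a \<in> expansions r x"
      using mu(3)
    proof (rule eventually_mono)
      fix a assume "\<forall>k. 0 < hl P (map a [0..<k])"
      then have "\<forall>k. map a [0..<k] \<in> prefs (expansions r x)"
        using hl_pos_P[OF pc] unfolding P_def by blast
      then show "a \<in> expansions r x" by (rule expansions_closed[OF r])
    qed
    then have "log_energy \<mu> = \<infinity>" using zc mu(1,2) unfolding zero_log_capacity_def by blast
    then show False using mu(4) by simp
  qed
  define N where "N = (\<Inter>n. Hev P n [] [])"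
  have Nev: "N \<in> events" unfolding N_def using Hev_events by (intro sets.countable_INT) auto
  have "prob N \<le> gq P n []" for n
  proof -
    have "prob N \<le> prob (Hev P n [] [])" unfolding N_def
      by (intro finite_measure_mono Hev_events) auto
    then show ?thesis by (simp add: prob_Hev)
  qed
  moreover have "(\<lambda>n. gq P n []) \<longlonglongrightarrow> 0" using hl_lim[OF pc, of "[]"] h0 by simp
  ultimately have "prob N \<le> 0" by (intro LIMSEQ_le_const[of "\<lambda>n. gq P n []"]) auto
  then have "prob N = 0" using measure_nonneg[of M N] by linarith
  then have "N \<in> null_sets M" using Nev by (intro null_setsI) (simp add: emeasure_eq_measure)
  moreover have "{w \<in> space M. x \<in> attractor r (\<lambda>v. A v w)} \<subseteq> N"
  proof
    fix w assume w: "w \<in> {w \<in> space M. x \<in> attractor r (\<lambda>v. A v w)}"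
    then obtain \<omega> where "x = coding_map r (\<lambda>v. A v w) \<omega>" unfolding attractor_def by auto
    then have "hitr (\<lambda>v. A v w) P n [] []" for n unfolding P_def by (rule path_hit)
    then show "w \<in> N" using w unfolding N_def Hev_def by auto
  qed
  ultimately show ?thesis by blast
qed

end

theorem proposition1p5:
  fixes M :: "'w measure" and A :: "bool list \<Rightarrow> 'w \<Rightarrow> bool" and lam :: real
  assumes "prob_space M"
    and "prob_space.indep_vars M (\<lambda>_. count_space UNIV) A {v. v \<noteq> []}"
    and "\<And>v. v \<noteq> [] \<Longrightarrow> prob_space.prob M {w \<in> space M. A v w} = 1/2"
    and "1/2 < lam" and "lam \<le> (sqrt 5 - 1) / 2"
    and "{0..lam/(1-lam)} \<subseteq>
           closure {x \<in> {0..lam/(1-lam)}. zero_log_capacity (expansions lam x)}"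
  shows "AE w in M. totally_disconnected (attractor lam (\<lambda>v. A v w))"
proof -
  interpret binmodel M A
    by (rule binmodel.intro[OF assms(1)], unfold_locales) (use assms(2,3) in auto)
  have s5: "sqrt 5 < 3"
  proof -
    have "sqrt 5 < sqrt ((3::real)^2)" by (rule real_sqrt_less_mono) simp
    then show ?thesis by simp
  qed
  have "(sqrt 5 - 1) / 2 < (1::real)" using s5 by simp
  then have r: "0 < lam" "lam < 1" using assms(4,5) by linarith+
  define I where "I = {0..lam/(1-lam)}"
  define D where "D = {x \<in> I. zero_log_capacity (expansions lam x)}"
  have ID: "I \<subseteq> closure D" using assms(6) unfolding I_def D_def .
  have SI: "attractor lam \<alpha> \<subseteq> I" for \<alpha>
    unfolding attractor_def I_def using coding_map_range[OF r] by auto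
  have "\<forall>x\<in>D. \<exists>N. N \<in> null_sets M \<and> {w \<in> space M. x \<in> attractor lam (\<lambda>v. A v w)} \<subseteq> N"
    using point_null[OF r] unfolding D_def by blast
  then obtain Nf where Nf: "\<And>x. x \<in> D \<Longrightarrow> Nf x \<in> null_sets M \<and> {w \<in> space M. x \<in> attractor lam (\<lambda>v. A v w)} \<subseteq> Nf x"
    by metis
  define G where "G = {pq \<in> \<rat> \<times> \<rat>. \<exists>x\<in>D. fst pq < x \<and> x < snd pq}"
  define X where "X pq = (SOME x. x \<in> D \<and> fst pq < x \<and> x < snd pq)" for pq
  have X: "X pq \<in> D \<and> fst pq < X pq \<and> X pq < snd pq" if "pq \<in> G" for pq
  proof -
    have "\<exists>x. x \<in> D \<and> fst pq < x \<and> x < snd pq" using that unfolding G_def by blast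
    then show ?thesis unfolding X_def by (rule someI_ex)
  qed
  define N where "N = (\<Union>pq\<in>G. Nf (X pq))"
  have cG: "countable G"
    by (rule countable_subset[of _ "\<rat> \<times> \<rat>"]) (auto simp: G_def intro: countable_SIGMA countable_rat)
  have Nnull: "N \<in> null_sets M" unfolding N_def
    using Nf X by (intro null_sets_UN'[OF cG]) blast
  show ?thesis
  proof (rule AE_I'[OF Nnull])
    show "{w \<in> space M. \<not> totally_disconnected (attractor lam (\<lambda>v. A v w))} \<subseteq> N"
    proof (rule subsetI, rule ccontr)
      fix w assume w: "w \<in> {w \<in> space M. \<not> totally_disconnected (attractor lam (\<lambda>v. A v w))}"
        and wN: "w \<notin> N"
      let ?S = "attractor lam (\<lambda>v. A v w)"
      have notin: "X pq \<notin> ?S" if "pq \<in> G" for pq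
      proof
        assume "X pq \<in> ?S"
        then have "w \<in> Nf (X pq)" using Nf[of "X pq"] X[OF that] w by auto
        then show False using wN that unfolding N_def by auto
      qed
      have "totally_disconnected ?S"
        unfolding totally_disconnected_def
      proof (intro allI impI, elim conjE)
        fix C assume CS: "C \<subseteq> ?S" and cC: "connected C"
        show "\<exists>a. C \<subseteq> {a}"
        proof (cases "C = {}")
          case True then show ?thesis by auto
        next
          case False
          then obtain a where aC: "a \<in> C" by auto
          have "C \<subseteq> {a}"
          proof
            fix b assume bC: "b \<in> C"
            show "b \<in> {a}"
            proof (rule ccontr)
              assume "b \<notin> {a}"
              then have ne: "b \<noteq> a" by simp
              define lo where "lo = min a b"
              define hi where "hi = max a b"
              have lohi: "lo < hi" "lo \<in> C" "hi \<in> C" using ne aC bC unfolding lo_def hi_def by (auto simp: min_def max_def)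
              have intv: "y \<in> C" if "lo \<le> y" "y \<le> hi" for y
                using cC lohi that unfolding connected_iff_interval by blast
              obtain p where p: "p \<in> \<rat>" "lo < p" "p < hi" using Rats_dense_in_real[OF lohi(1)] by blast
              obtain q where q: "q \<in> \<rat>" "p < q" "q < hi" using Rats_dense_in_real[OF p(3)] by blast
              define m where "m = (p + q) / 2"
              have "m \<in> C" using p q by (intro intv) (auto simp: m_def)
              then have "m \<in> I" using CS SI by blast
              then have "m \<in> closure D" using ID by blast
              then obtain y where y: "y \<in> D" "dist y m < (q - p) / 2"
                using closure_approachable[of m D] p q by (metis diff_gt_0_iff_gt half_gt_zero)
              then have "\<bar>y - (p + q) / 2\<bar> < (q - p) / 2" unfolding m_def dist_real_def by simp
              then have "p < y" "y < q" by (auto simp: abs_less_iff field_simps)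
              then have G: "(p, q) \<in> G" unfolding G_def using p q y by auto
              have "X (p, q) \<in> C" using X[OF G] p q by (intro intv) auto
              then show False using notin[OF G] CS by blast
            qed
          qed
          then show ?thesis by blast
        qed
      qed
      then show False using w by simp
    qed
  qed
qed

end
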